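(* Let $C=(C_1,\dots,C_n)\in\mathbb{F}_p^n$ and $(d_1,\dots,d_n)\in\mathbb{F}_p^n$ be a solution of the system $$\sum_{j=1}^n M_jC_j=0,\qquad \Omega^M_j C=d_j C\ \ (j=1,\dots,n-1),\qquad d_n=0.$$ Let the index $i$ be such that $C_i\neq 0$ and $C_j=0$ for $j=1,\dots,i-1$. Then $$d_j=M_j\ (j=1,\dots,i-1),\qquad d_i=\sum_{j=i}^n M_j,\quad d_i\neq M_i,\qquad d_j=0\ (j=i+1,\dots,n),$$ $$\sum_{l=i+1}^n M_l\neq 0,\qquad C_j=-\frac{M_i}{\sum_{l=i+1}^n M_l}\,C_i\quad (j=i+1,\dots,n).$$ Conversely, if a pair $C=(C_1,\dots,C_n)$, $(d_1,\dots,d_n)\in\mathbb{F}_p^n$ satisfies, for some index $i$, the conditions $C_i\neq0$, $C_j=0$ for $j<i$, together with $d_j=M_j$ for $j<i$, $d_i=\sum_{j=i}^nM_j$, $d_i\neq M_i$, $d_j=0$ for $j>i$, $\sum_{l=i+1}^nM_l\neq0$, and $C_j=-\frac{M_i}{\sum_{l=i+1}^nM_l}C_i$ for $j>i$, then it is a solution of the system above.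
   Context: $p$ and $q$ are primes, $n$ is a positive integer with $p>n\geq 2$ and $p>q$; $(m_1,\dots,m_n)\in\mathbb{Z}_{>0}^n$ with $m_i<q$. For $i=1,\dots,n$, $M_i$ is the least positive integer with $M_i\equiv -m_i/q \pmod p$. For $j\neq l$, $\Omega^M_{jl}$ is the $n\times n$ matrix over $\mathbb{F}_p$ whose only nonzero entries are: $(j,j)$-entry $M_l$, $(j,l)$-entry $-M_l$, $(l,j)$-entry $-M_j$, $(l,l)$-entry $M_j$. For $j=1,\dots,n-1$, $\Omega^M_j=\sum_{l=j+1}^n\Omega^M_{jl}$, acting on column vectors $C\in\mathbb{F}_p^n$. (This system describes the possible leading coefficient $C$ and exponents $(d_1,\dots,d_n)$ mod $p$ of the leading term, in lexicographic order $z_1>z_2>\dots>z_n$, of a polynomial solution over $\mathbb{F}_p$ of the KZ system $\partial I/\partial z_i=\frac1q\sum_{j\ne i}\frac{\Omega_{ij}}{z_i-z_j}I$, $\sum m_iI_i=0$.) *)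

theory Defs
  imports "Berlekamp_Zassenhaus.Finite_Field"
begin

text \<open>F_p is modelled as the type 'p mod_ring with CARD('p) = p prime.
  Vectors in F_p^n are functions nat => 'p mod_ring, only indices 1..n matter.\<close>

text \<open>M_i: least positive integer with M_i = -m_i/q (mod p), i.e. M_i * q = -m_i (mod p).\<close>
definition Mnat :: "nat \<Rightarrow> nat \<Rightarrow> (nat \<Rightarrow> nat) \<Rightarrow> nat \<Rightarrow> nat" where
  "Mnat p q m i = (LEAST M::nat. M > 0 \<and> [int M * int q = - int (m i)] (mod int p))"

definition Omega_pair :: "(nat \<Rightarrow> 'a::comm_ring_1) \<Rightarrow> nat \<Rightarrow> nat \<Rightarrow> nat \<Rightarrow> nat \<Rightarrow> 'a" where
  "Omega_pair M j l a b =
     (if a = j \<and> b = j then M l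
      else if a = j \<and> b = l then - M l
      else if a = l \<and> b = j then - M j
      else if a = l \<and> b = l then M j
      else 0)"

definition Omega :: "(nat \<Rightarrow> 'a::comm_ring_1) \<Rightarrow> nat \<Rightarrow> nat \<Rightarrow> nat \<Rightarrow> nat \<Rightarrow> 'a" where
  "Omega M n j a b = (\<Sum>l = j+1..n. Omega_pair M j l a b)"

definition mat_act :: "nat \<Rightarrow> (nat \<Rightarrow> nat \<Rightarrow> 'a::comm_ring_1) \<Rightarrow> (nat \<Rightarrow> 'a) \<Rightarrow> nat \<Rightarrow> 'a" where
  "mat_act n A C a = (\<Sum>b = 1..n. A a b * C b)"

definition is_solution :: "nat \<Rightarrow> (nat \<Rightarrow> 'a::comm_ring_1) \<Rightarrow> (nat \<Rightarrow> 'a) \<Rightarrow> (nat \<Rightarrow> 'a) \<Rightarrow> bool" where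
  "is_solution n M C d \<longleftrightarrow>
     (\<Sum>j = 1..n. M j * C j) = 0 \<and>
     (\<forall>j \<in> {1..n-1}. \<forall>a \<in> {1..n}. mat_act n (Omega M n j) C a = d j * C a) \<and>
     d n = 0"

end

theory Submission
  imports Defs
begin

lemma pair_act:
  fixes M C :: "nat \<Rightarrow> 'a::comm_ring_1"
  assumes "j \<noteq> l" "j \<in> {1..n}" "l \<in> {1..n}"
  shows "(\<Sum>b = 1..n. Omega_pair M j l a b * C b) =
    (if a = j then M l * (C j - C l) else if a = l then M j * (C l - C j) else 0)"
proof -
  have e: "Omega_pair M j l a b * C b =
     (if a = j then (if b = j then M l * C j else 0) + (if b = l then - M l * C l else 0)
      else if a = l then (if b = j then - M j * C j else 0) + (if b = l then M j * C l else 0) else 0)" for b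
    using assms(1) by (auto simp: Omega_pair_def)
  show ?thesis unfolding e using assms
    by (auto simp: sum.distrib sum.delta algebra_simps)
qed

lemma omega_act:
  fixes M C :: "nat \<Rightarrow> 'a::comm_ring_1"
  assumes "1 \<le> j" "j < n" "a \<in> {1..n}"
  shows "mat_act n (Omega M n j) C a =
    (if a = j then C j * (\<Sum>l = j+1..n. M l) - (\<Sum>l = j+1..n. M l * C l)
     else if j < a then M j * (C a - C j) else 0)"
proof -
  have "mat_act n (Omega M n j) C a = (\<Sum>l = j+1..n. \<Sum>b = 1..n. Omega_pair M j l a b * C b)"
    unfolding mat_act_def Omega_def by (simp add: sum_distrib_right) (rule sum.swap)
  also have "\<dots> = (\<Sum>l = j+1..n. (if a = j then M l * (C j - C l) else if a = l then M j * (C l - C j) else 0))"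
    proof (rule sum.cong[OF refl])
    fix l assume "l \<in> {j+1..n}"
    then show "(\<Sum>b = 1..n. Omega_pair M j l a b * C b) = (if a = j then M l * (C j - C l) else if a = l then M j * (C l - C j) else 0)"
      using pair_act[where M=M and C=C and a=a and j=j and l=l and n=n] assms by auto
  qed
  also have "\<dots> = (if a = j then C j * (\<Sum>l = j+1..n. M l) - (\<Sum>l = j+1..n. M l * C l)
     else if j < a then M j * (C a - C j) else 0)"
    using assms by (auto simp: sum.delta sum_distrib_left sum_subtractf algebra_simps)
  finally show ?thesis .
qed

lemma sum_zero_prefix:
  fixes f :: "nat \<Rightarrow> 'a::comm_monoid_add"
  assumes "a \<le> i" "\<And>l. a \<le> l \<Longrightarrow> l < i \<Longrightarrow> f l = 0"
  shows "sum f {a..n} = sum f {i..n}"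
  by (rule sum.mono_neutral_right) (use assms in auto)

lemma main:
  fixes M C d :: "nat \<Rightarrow> 'a::field"
  assumes hM: "\<forall>k \<in> {1..n}. M k \<noteq> 0"
    and hi: "i \<in> {1..n}" and hCi: "C i \<noteq> 0" and hCj: "\<forall>j \<in> {1..<i}. C j = 0"
  shows "is_solution n M C d \<longleftrightarrow>
    ((\<forall>j \<in> {1..<i}. d j = M j) \<and>
     d i = (\<Sum>j = i..n. M j) \<and> d i \<noteq> M i \<and>
     (\<forall>j \<in> {i+1..n}. d j = 0) \<and>
     (\<Sum>l = i+1..n. M l) \<noteq> 0 \<and>
     (\<forall>j \<in> {i+1..n}. C j = - (M i / (\<Sum>l = i+1..n. M l)) * C i))"
    (is "_ \<longleftrightarrow> ?R")
proof -
  define S where "S = (\<Sum>l = i+1..n. M l)"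
  define T where "T = (\<Sum>l = i+1..n. M l * C l)"
  have Mi: "M i \<noteq> 0" using hM hi by auto
  have tot: "(\<Sum>j = 1..n. M j * C j) = M i * C i + T"
  proof -
    have "(\<Sum>j = 1..n. M j * C j) = (\<Sum>j = i..n. M j * C j)"
      by (rule sum_zero_prefix) (use hi hCj in auto)
    also have "\<dots> = M i * C i + T" unfolding T_def using hi
      by (simp add: sum.atLeast_Suc_atMost)
    finally show ?thesis .
  qed
  have dsum: "(\<Sum>j = i..n. M j) = M i + S" unfolding S_def using hi
    by (simp add: sum.atLeast_Suc_atMost)
  show ?thesis
  proof
    assume sol: "is_solution n M C d"
    have E: "\<And>j a. 1 \<le> j \<Longrightarrow> j < n \<Longrightarrow> a \<in> {1..n} \<Longrightarrow>
      (if a = j then C j * (\<Sum>l = j+1..n. M l) - (\<Sum>l = j+1..n. M l * C l)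
       else if j < a then M j * (C a - C j) else 0) = d j * C a"
      using sol unfolding is_solution_def by (subst omega_act[symmetric]) auto
    have T: "T = - (M i * C i)" using sol tot unfolding is_solution_def
      by (simp add: eq_neg_iff_add_eq_0 add.commute)
    have ilt: "i < n"
    proof (rule ccontr)
      assume "\<not> i < n" then have "i = n" using hi by auto
      then have "T = 0" unfolding T_def by simp
      with T Mi hCi show False by simp
    qed
    have A: "\<forall>j \<in> {1..<i}. d j = M j"
    proof
      fix j assume j: "j \<in> {1..<i}"
      have "M j * (C i - C j) = d j * C i" using E[of j i] j hi ilt by auto
      then show "d j = M j" using hCj j hCi by simp
    qed
    have B: "\<forall>j \<in> {i+1..n}. d j = 0"
    proof
      fix j assume j: "j \<in> {i+1..n}"
      show "d j = 0"
      proof (cases "j = n")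
        case True then show ?thesis using sol unfolding is_solution_def by simp
      next
        case False
        then have "0 = d j * C i" using E[of j i] j hi by auto
        then show ?thesis using hCi by simp
      qed
    qed
    have "C i * S - T = d i * C i" using E[of i i] hi ilt unfolding S_def T_def by auto
    then have "(M i + S) * C i = d i * C i" using T by (simp add: algebra_simps)
    then have di: "d i = M i + S" using hCi by simp
    have rows: "M i * (C a - C i) = d i * C a" if "a \<in> {i+1..n}" for a
      using E[of i a] that hi ilt by auto
    have dne: "d i \<noteq> M i"
    proof
      assume "d i = M i"
      then have "M i * (C (i+1) - C i) = M i * C (i+1)" using rows[of "i+1"] ilt by auto
      then have "M i * C i = 0" by (simp add: algebra_simps)
      with Mi hCi show False by simp
    qed
    then have Sne: "S \<noteq> 0" using di by simp
    have Cj: "\<forall>j \<in> {i+1..n}. C j = - (M i / S) * C i"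
    proof
      fix j assume j: "j \<in> {i+1..n}"
      have "M i * (C j - C i) = (M i + S) * C j" using rows[OF j] di by simp
      then have "S * C j = - (M i * C i)" by (simp add: algebra_simps eq_neg_iff_add_eq_0)
      then show "C j = - (M i / S) * C i" using Sne by (simp add: field_simps)
    qed
    show ?R using A B di dne Sne Cj dsum unfolding S_def by simp
  next
    assume R: ?R
    have di: "d i = M i + S" and dne: "d i \<noteq> M i" and Sne: "S \<noteq> 0"
      and A: "\<forall>j \<in> {1..<i}. d j = M j" and B: "\<forall>j \<in> {i+1..n}. d j = 0"
      and Cj: "\<forall>j \<in> {i+1..n}. C j = - (M i / S) * C i"
      using R dsum unfolding S_def by auto
    have ilt: "i < n"
    proof (rule ccontr)
      assume "\<not> i < n" then have "i = n" using hi by auto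
      then have "S = 0" unfolding S_def by simp
      with di dne show False by simp
    qed
    have T: "T = - (M i * C i)"
    proof -
      have "T = (\<Sum>l = i+1..n. M l * (- (M i / S) * C i))" unfolding T_def
        by (rule sum.cong) (use Cj in auto)
      also have "\<dots> = S * (- (M i / S) * C i)" by (simp only: S_def sum_distrib_right)
      also have "\<dots> = - (M i * C i)" using Sne by (simp add: field_simps)
      finally show ?thesis .
    qed
    have s0: "(\<Sum>j = 1..n. M j * C j) = 0" using tot T by simp
    have dn: "d n = 0" using B ilt by auto
    have rows: "mat_act n (Omega M n j) C a = d j * C a" if j: "j \<in> {1..n-1}" and a: "a \<in> {1..n}" for j a
    proof -
      have jn: "1 \<le> j" "j < n" using j ilt by auto
      consider "j < i" | "j = i" | "i < j" by linarith
      then show ?thesis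
      proof cases
        case 1
        have "(\<Sum>l = j+1..n. M l * C l) = (\<Sum>l = 1..n. M l * C l)"
          by (rule sum_zero_prefix[symmetric]) (use 1 hCj in auto)
        then have z: "(\<Sum>l = j+1..n. M l * C l) = 0" using s0 by simp
        show ?thesis unfolding omega_act[OF jn a]
          using 1 A hCj z a jn by auto
      next
        case 2
        have "C a = - (M i / S) * C i" if "i < a" using Cj that a by auto
        moreover have "(\<Sum>l = j+1..n. M l) = S" "(\<Sum>l = j+1..n. M l * C l) = T"
          using 2 by (simp_all add: S_def T_def)
        ultimately show ?thesis unfolding omega_act[OF jn a]
          using 2 a di T Sne hCj
          by (auto simp: field_simps)
      next
        case 3
        have dj: "d j = 0" using B 3 jn by auto
        have cc: "C l = C j" if "l \<in> {j+1..n}" for l using Cj that 3 jn by auto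
        have "(\<Sum>l = j+1..n. M l * C l) = (\<Sum>l = j+1..n. M l * C j)"
          by (rule sum.cong) (use cc in auto)
        then have z: "C j * (\<Sum>l = j+1..n. M l) - (\<Sum>l = j+1..n. M l * C l) = 0"
          by (simp add: sum_distrib_left sum_distrib_right algebra_simps)
        have "C a = C j" if "j < a" using cc that a by auto
        then show ?thesis unfolding omega_act[OF jn a] using dj z by auto
      qed
    qed
    show "is_solution n M C d" unfolding is_solution_def using s0 dn rows by blast
  qed
qed

lemma M_nonzero:
  fixes p q :: nat and m :: "nat \<Rightarrow> nat"
  assumes hp: "p = CARD('p::prime_card)" and hq: "prime q" and hpq: "p > q"
    and hk: "0 < m k" "m k < q"
  shows "(of_nat (Mnat p q m k) :: 'p mod_ring) \<noteq> 0"
proof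
  have pp: "prime p" using hp prime_card by auto
  have cop: "coprime (int q) (int p)"
  proof -
    have "coprime q p" using pp hq hpq
      by (metis prime_nat_iff_prime primes_coprime less_not_refl)
    then show ?thesis by simp
  qed
  then have "gcd (int q) (int p) dvd - int (m k)" by simp
  then obtain x where x: "[int q * x = - int (m k)] (mod int p)"
    using cong_solve_dvd_int by blast
  define M0 where "M0 = nat (x mod int p) + p"
  have "M0 > 0" unfolding M0_def using hpq by auto
  moreover have "[int M0 * int q = - int (m k)] (mod int p)"
  proof -
    have "int M0 = x mod int p + int p" unfolding M0_def using hpq by simp
    then have "[int M0 = x] (mod int p)"
      by (simp add: cong_def mod_add_right_eq[symmetric] ) 
    then have "[int M0 * int q = x * int q] (mod int p)" by (rule cong_mult) simp
    with x show ?thesis by (metis cong_trans mult.commute)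
  qed
  ultimately have ex: "\<exists>M. M > 0 \<and> [int M * int q = - int (m k)] (mod int p)" by blast
  have L: "[int (Mnat p q m k) * int q = - int (m k)] (mod int p)"
    unfolding Mnat_def using LeastI_ex[OF ex] by blast
  assume "(of_nat (Mnat p q m k) :: 'p mod_ring) = 0"
  then have "CARD('p) dvd Mnat p q m k" by (rule of_nat_0_mod_ring_dvd)
  then have "int p dvd int (Mnat p q m k) * int q" using hp by simp
  then have "int p dvd - int (m k)" using L by (metis cong_dvd_iff)
  then have "p dvd m k" by simp
  then have "p \<le> m k" using hk by (simp add: dvd_imp_le)
  with hk hpq show False by simp
qed

theorem theorem5p3:
  fixes p q n :: nat and m :: "nat \<Rightarrow> nat"
    and C d :: "nat \<Rightarrow> 'p::prime_card mod_ring" and i :: nat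
  defines "M \<equiv> (\<lambda>k. of_nat (Mnat p q m k) :: 'p mod_ring)"
  assumes hp: "p = CARD('p)" and hq: "prime q" and hpq: "p > q"
    and hn: "2 \<le> n" "n < p"
    and hm: "\<forall>k \<in> {1..n}. 0 < m k \<and> m k < q"
    and hi: "i \<in> {1..n}" and hCi: "C i \<noteq> 0" and hCj: "\<forall>j \<in> {1..<i}. C j = 0"
  shows "is_solution n M C d \<longleftrightarrow>
    ((\<forall>j \<in> {1..<i}. d j = M j) \<and>
     d i = (\<Sum>j = i..n. M j) \<and> d i \<noteq> M i \<and>
     (\<forall>j \<in> {i+1..n}. d j = 0) \<and>
     (\<Sum>l = i+1..n. M l) \<noteq> 0 \<and>
     (\<forall>j \<in> {i+1..n}. C j = - (M i / (\<Sum>l = i+1..n. M l)) * C i))"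
proof (rule main[OF _ hi hCi hCj])
  show "\<forall>k\<in>{1..n}. M k \<noteq> 0"
    unfolding M_def using M_nonzero[OF hp hq hpq] hm by blast
qed

end
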